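(* Let $T$ be a finite tree rooted at a fixed non-leaf vertex $r$ and let $k\geq 1$. For each $0\leq i\leq k-1$, let $I_i$ be the graph on $V(T)$ in which distinct $u,v$ are adjacent iff $f_i(u)\cap f_i(v)\neq\emptyset$, where $f_i(u)=[s(p^i(u)),\,t(p^{k-1-i}(u))]$. Then for every $0\leq i\leq k-1$, $I_i$ is a supergraph of $T^k$, i.e. $E(T^k)\subseteq E(I_i)$.
   Context: $T^k$ is the graph on $V(T)$ in which distinct $u,v$ are adjacent iff $d_T(u,v)\leq k$, where $d_T$ is the distance in $T$. For vertices $u,v$, $u\preceq v$ ($u$ is an ancestor of $v$) means that $u$ lies on the unique path in $T$ from $r$ to $v$. For $u\neq r$, $p(u)$ is the neighbour of $u$ on the path from $u$ to $r$, and $p(r)=r$; $p^0(u)=u$ and $p^i(u)=p(p^{i-1}(u))$ for $i\geq 1$. Let $l_1,\ldots,l_m$ be the leaves (degree-1 vertices) of $T$ in the order in which they appear in some depth-first traversal of $T$ starting from $r$; for a vertex $u$, $L(u)=\{i: u\preceq l_i\}$, $s(u)=\min L(u)$, $t(u)=\max L(u)$. (Each $f_i(u)$ is a closed interval with $s(p^i(u))\leq t(p^{k-1-i}(u))$.) *)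

theory Defs
  imports Main
begin

(* A finite (undirected, simple) graph is given by a vertex set V and a
   symmetric irreflexive adjacency relation E on V. *)

definition is_walk :: "'a set \<Rightarrow> ('a \<Rightarrow> 'a \<Rightarrow> bool) \<Rightarrow> 'a list \<Rightarrow> bool" where
  "is_walk V E xs \<longleftrightarrow> xs \<noteq> [] \<and> set xs \<subseteq> V \<and>
     (\<forall>j. Suc j < length xs \<longrightarrow> E (xs ! j) (xs ! Suc j))"

definition is_path :: "'a set \<Rightarrow> ('a \<Rightarrow> 'a \<Rightarrow> bool) \<Rightarrow> 'a list \<Rightarrow> bool" where
  "is_path V E xs \<longleftrightarrow> is_walk V E xs \<and> distinct xs"

definition is_tree :: "'a set \<Rightarrow> ('a \<Rightarrow> 'a \<Rightarrow> bool) \<Rightarrow> bool" where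
  "is_tree V E \<longleftrightarrow> finite V \<and> V \<noteq> {} \<and>
     (\<forall>u w. E u w \<longrightarrow> u \<in> V \<and> w \<in> V) \<and>
     (\<forall>u w. E u w \<longrightarrow> E w u) \<and> (\<forall>u. \<not> E u u) \<and>
     (\<forall>u\<in>V. \<forall>w\<in>V. \<exists>xs. is_walk V E xs \<and> hd xs = u \<and> last xs = w) \<and>
     \<comment> \<open>acyclic: no cycle of length at least 3\<close>
     (\<nexists>xs. is_path V E xs \<and> length xs \<ge> 3 \<and> E (last xs) (hd xs))"

definition is_leaf :: "'a set \<Rightarrow> ('a \<Rightarrow> 'a \<Rightarrow> bool) \<Rightarrow> 'a \<Rightarrow> bool" where
  "is_leaf V E u \<longleftrightarrow> u \<in> V \<and> card {w \<in> V. E u w} = 1"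

definition tdist :: "'a set \<Rightarrow> ('a \<Rightarrow> 'a \<Rightarrow> bool) \<Rightarrow> 'a \<Rightarrow> 'a \<Rightarrow> nat" where
  "tdist V E u v = (LEAST n. \<exists>xs. is_walk V E xs \<and> hd xs = u \<and> last xs = v \<and> length xs = Suc n)"

definition anc :: "'a set \<Rightarrow> ('a \<Rightarrow> 'a \<Rightarrow> bool) \<Rightarrow> 'a \<Rightarrow> 'a \<Rightarrow> 'a \<Rightarrow> bool" where
  "anc V E r u v \<longleftrightarrow> (\<exists>xs. is_path V E xs \<and> hd xs = r \<and> last xs = v \<and> u \<in> set xs)"

definition parent :: "'a set \<Rightarrow> ('a \<Rightarrow> 'a \<Rightarrow> bool) \<Rightarrow> 'a \<Rightarrow> 'a \<Rightarrow> 'a" where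
  "parent V E r u = (if u = r then r else (THE w. E u w \<and> anc V E r w u))"

definition is_dfs_order :: "'a set \<Rightarrow> ('a \<Rightarrow> 'a \<Rightarrow> bool) \<Rightarrow> 'a \<Rightarrow> 'a list \<Rightarrow> bool" where
  "is_dfs_order V E r xs \<longleftrightarrow> distinct xs \<and> set xs = V \<and> xs \<noteq> [] \<and> hd xs = r \<and>
     (\<forall>i. 0 < i \<and> i < length xs \<longrightarrow>
        (\<exists>j<i. xs ! j = parent V E r (xs ! i) \<and>
               (\<forall>j'. j < j' \<and> j' \<le> i \<longrightarrow> anc V E r (xs ! j) (xs ! j'))))"

(* leaves l_0, ..., l_{m-1} in order of the traversal (0-based indices) *)
definition leaves_seq :: "'a set \<Rightarrow> ('a \<Rightarrow> 'a \<Rightarrow> bool) \<Rightarrow> 'a list \<Rightarrow> 'a list" where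
  "leaves_seq V E xs = filter (is_leaf V E) xs"

definition Lset :: "'a set \<Rightarrow> ('a \<Rightarrow> 'a \<Rightarrow> bool) \<Rightarrow> 'a \<Rightarrow> 'a list \<Rightarrow> 'a \<Rightarrow> nat set" where
  "Lset V E r xs u = {i. i < length (leaves_seq V E xs) \<and> anc V E r u (leaves_seq V E xs ! i)}"

definition sL :: "'a set \<Rightarrow> ('a \<Rightarrow> 'a \<Rightarrow> bool) \<Rightarrow> 'a \<Rightarrow> 'a list \<Rightarrow> 'a \<Rightarrow> nat" where
  "sL V E r xs u = Min (Lset V E r xs u)"

definition tL :: "'a set \<Rightarrow> ('a \<Rightarrow> 'a \<Rightarrow> bool) \<Rightarrow> 'a \<Rightarrow> 'a list \<Rightarrow> 'a \<Rightarrow> nat" where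
  "tL V E r xs u = Max (Lset V E r xs u)"

definition f_int :: "'a set \<Rightarrow> ('a \<Rightarrow> 'a \<Rightarrow> bool) \<Rightarrow> 'a \<Rightarrow> 'a list \<Rightarrow> nat \<Rightarrow> nat \<Rightarrow> 'a \<Rightarrow> nat set" where
  "f_int V E r xs k i u =
     {sL V E r xs ((parent V E r ^^ i) u) .. tL V E r xs ((parent V E r ^^ (k - 1 - i)) u)}"

definition pow_adj :: "'a set \<Rightarrow> ('a \<Rightarrow> 'a \<Rightarrow> bool) \<Rightarrow> nat \<Rightarrow> 'a \<Rightarrow> 'a \<Rightarrow> bool" where
  "pow_adj V E k u v \<longleftrightarrow> u \<in> V \<and> v \<in> V \<and> u \<noteq> v \<and> tdist V E u v \<le> k"

definition I_adj :: "'a set \<Rightarrow> ('a \<Rightarrow> 'a \<Rightarrow> bool) \<Rightarrow> 'a \<Rightarrow> 'a list \<Rightarrow> nat \<Rightarrow> nat \<Rightarrow> 'a \<Rightarrow> 'a \<Rightarrow> bool" where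
  "I_adj V E r xs k i u v \<longleftrightarrow> u \<in> V \<and> v \<in> V \<and> u \<noteq> v \<and>
     f_int V E r xs k i u \<inter> f_int V E r xs k i v \<noteq> {}"

end

theory Submission
  imports Defs
begin


lemma walk_iff: "is_walk V E xs \<longleftrightarrow> xs \<noteq> [] \<and> set xs \<subseteq> V \<and> successively E xs"
  by (simp add: is_walk_def successively_conv_nth)

lemma walk_to_path:
  assumes "xs \<noteq> []" "successively E xs"
  shows "\<exists>ys. ys \<noteq> [] \<and> successively E ys \<and> distinct ys \<and> hd ys = hd xs \<and> last ys = last xs \<and> set ys \<subseteq> set xs"
  using assms
proof (induction "length xs" arbitrary: xs rule: less_induct)
  case less
  show ?case
  proof (cases "distinct xs")
    case True then show ?thesis using less by blast
  next
    case False
    then obtain a b c y where xs: "xs = a @ [y] @ b @ [y] @ c" using not_distinct_decomp by blast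
    define zs where "zs = a @ [y] @ c"
    have "successively E zs" using less(3) unfolding xs zs_def
      by (auto simp: successively_append_iff successively_Cons split: if_splits)
    moreover have "length zs < length xs" using xs zs_def by simp
    moreover have "zs \<noteq> []" by (simp add: zs_def)
    ultimately obtain ys where ys: "ys \<noteq> [] \<and> successively E ys \<and> distinct ys \<and> hd ys = hd zs \<and> last ys = last zs \<and> set ys \<subseteq> set zs"
      using less(1) by blast
    have "hd zs = hd xs" "last zs = last xs" "set zs \<subseteq> set xs" using xs zs_def
      by (auto simp: hd_append last_append)
    then show ?thesis using ys by auto
  qed
qed




lemma path_unique:
  assumes sym: "\<And>x y. E x y \<Longrightarrow> E y x"
    and nocyc: "\<And>C. distinct C \<Longrightarrow> successively E C \<Longrightarrow> length C \<ge> 3 \<Longrightarrow> E (last C) (hd C) \<Longrightarrow> False"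
  shows "P \<noteq> [] \<Longrightarrow> Q \<noteq> [] \<Longrightarrow> distinct P \<Longrightarrow> distinct Q \<Longrightarrow> successively E P \<Longrightarrow> successively E Q
     \<Longrightarrow> hd P = hd Q \<Longrightarrow> last P = last Q \<Longrightarrow> P = Q"
proof (induction P arbitrary: Q)
  case Nil then show ?case by simp
next
  case (Cons x P')
  obtain Q' where Q: "Q = x # Q'" using Cons.prems by (cases Q) auto
  show ?case
  proof (cases "P' = []")
    case True
    then have "last Q = x" using Cons.prems by simp
    then have "Q' = []" using Cons.prems(4) Q by (metis distinct.simps(2) last.simps last_in_set)
    then show ?thesis using True Q by simp
  next
    case P'ne: False
    show ?thesis
    proof (cases "Q' = []")
      case True
      then have "last (x # P') = x" using Cons.prems Q by simp
      then have False using Cons.prems(3) P'ne by (metis distinct.simps(2) last.simps last_in_set)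
      then show ?thesis ..
    next
      case Q'ne: False
      have EP: "E x (hd P')" using Cons.prems(5) P'ne by (cases P') auto
      have EQ: "E x (hd Q')" using Cons.prems(6) Q'ne Q by (cases Q') auto
      show ?thesis
      proof (cases "hd P' = hd Q'")
        case True
        have "P' = Q'"
          apply (rule Cons.IH)
          using Cons.prems Q P'ne Q'ne True by (auto simp: successively_Cons)
        then show ?thesis using Q by simp
      next
        case hdne: False
        have "\<exists>y\<in>set Q'. y \<in> set (x # P')"
          proof -
            have "last Q' \<in> set Q'" using Q'ne by simp
            moreover have "last Q' = last (x # P')" using Cons.prems(8) Q Q'ne by simp
            ultimately show ?thesis by (metis last_in_set list.distinct(1))
          qed
        then obtain D y R where QD: "Q' = D @ y # R" and yP: "y \<in> set (x # P')"
          and Dn: "\<forall>z\<in>set D. z \<notin> set (x # P')"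
          using split_list_first_prop[of Q' "\<lambda>z. z \<in> set (x # P')"] by blast
        have "y \<noteq> x" using Cons.prems(4) Q QD by auto
        then have "y \<in> set P'" using yP by simp
        then obtain Ep R2 where PE: "P' = Ep @ y # R2" by (meson split_list)
        define C where "C = x # Ep @ [y] @ rev D"
        have dC: "distinct C"
        proof -
          have a: "x \<notin> set Ep" "x \<noteq> y" "distinct Ep" "y \<notin> set Ep" using Cons.prems(3) PE by auto
          have b: "distinct D" "y \<notin> set D" using Cons.prems(4) Q QD by auto
          have c: "set D \<inter> insert x (set Ep) = {}" using Dn PE by auto
          show ?thesis unfolding C_def using a b c by auto
        qed
        have s1: "successively E (x # Ep @ [y])"
        proof -
          have "x # P' = (x # Ep @ [y]) @ R2" using PE by simp
          then show ?thesis using Cons.prems(5) by (metis successively_append_iff)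
        qed
        have s2: "successively E (D @ [y])"
        proof -
          have "Q = [x] @ (D @ [y]) @ R" using Q QD by simp
          then show ?thesis using Cons.prems(6) by (metis successively_append_iff)
        qed
        have s3: "successively E ([y] @ rev D)"
        proof -
          have "successively (\<lambda>a b. E b a) (D @ [y])" using s2 sym by (rule successively_mono) blast
          then have "successively E (rev (D @ [y]))" by (simp only: successively_rev)
          then show ?thesis by simp
        qed
        have sC: "successively E C"
        proof -
          have "C = (x # Ep) @ ([y] @ rev D)" unfolding C_def by simp
          moreover have "E (last (x # Ep)) y"
            using s1 by (metis append_Cons append_is_Nil_conv last_ConsL last_appendR list.sel(1) list.simps(3)
               successively_append_iff)
          moreover have "successively E (x # Ep)" using s1
            by (metis append_Cons successively_append_iff)
          ultimately show ?thesis using s3 by (simp only: successively_append_iff) simp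
        qed
        show ?thesis
        proof (cases "D = []")
          case True
          then have "y = hd Q'" using QD by simp
          then have "Ep \<noteq> []" using hdne PE by auto
          then have "length C \<ge> 3" unfolding C_def by (cases Ep) auto
          moreover have "E (last C) (hd C)" using True \<open>y = hd Q'\<close> EQ sym unfolding C_def by simp
          ultimately show ?thesis using nocyc dC sC by blast
        next
          case False
          then have "length C \<ge> 3" unfolding C_def by (cases D) auto
          moreover have "last C = hd Q'" using False QD unfolding C_def
            by (simp add: last_rev)
          ultimately show ?thesis using nocyc dC sC EQ sym unfolding C_def by (metis list.sel(1))
        qed
      qed
    qed
  qed
qed




locale tr =
  fixes V :: "'a set" and E :: "'a \<Rightarrow> 'a \<Rightarrow> bool" and r :: 'a
  assumes tree: "is_tree V E" and rV: "r \<in> V"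
begin

lemma sym: "E x y \<Longrightarrow> E y x" using tree unfolding is_tree_def by blast
lemma inV: "E x y \<Longrightarrow> x \<in> V \<and> y \<in> V" using tree unfolding is_tree_def by blast
lemma irr: "\<not> E x x" using tree unfolding is_tree_def by blast
lemma finV: "finite V" using tree unfolding is_tree_def by blast

lemma path_iff: "is_path V E P \<longleftrightarrow> P \<noteq> [] \<and> set P \<subseteq> V \<and> successively E P \<and> distinct P"
  by (auto simp: is_path_def walk_iff)

lemma succ_V: "successively E C \<Longrightarrow> length C \<ge> 2 \<Longrightarrow> set C \<subseteq> V"
proof (induction C)
  case (Cons a C)
  then obtain b C' where C: "C = b # C'" by (cases C) auto
  then have "E a b" using Cons.prems by simp
  then have ab: "a \<in> V" "b \<in> V" using inV by auto
  show ?case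
  proof (cases "C' = []")
    case True then show ?thesis using C ab by simp
  next
    case False
    then have "length C \<ge> 2" using C by (cases C') auto
    moreover have "successively E C" using Cons.prems(1) by (auto simp: successively_Cons)
    ultimately have "set C \<subseteq> V" using Cons.IH by blast
    then show ?thesis using ab by simp
  qed
qed simp

lemma nocyc: "distinct C \<Longrightarrow> successively E C \<Longrightarrow> length C \<ge> 3 \<Longrightarrow> E (last C) (hd C) \<Longrightarrow> False"
proof -
  assume a: "distinct C" "successively E C" "length C \<ge> 3" "E (last C) (hd C)"
  then have "set C \<subseteq> V" using succ_V by simp
  then have "is_path V E C" using a path_iff by auto
  then show False using a tree unfolding is_tree_def by blast
qed

lemma punique: assumes "is_path V E P" "is_path V E Q" "hd P = hd Q" "last P = last Q" shows "P = Q"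
  using assms unfolding path_iff by (intro path_unique[of E P Q, OF sym nocyc]) auto

lemma conn: "u \<in> V \<Longrightarrow> w \<in> V \<Longrightarrow> \<exists>P. is_path V E P \<and> hd P = u \<and> last P = w"
proof -
  assume "u \<in> V" "w \<in> V"
  then obtain xs where "is_walk V E xs" "hd xs = u" "last xs = w" using tree unfolding is_tree_def by blast
  then obtain ys where ys: "ys \<noteq> [] \<and> successively E ys \<and> distinct ys \<and> hd ys = hd xs \<and> last ys = last xs \<and> set ys \<subseteq> set xs"
    using walk_to_path[of xs E] unfolding walk_iff by blast
  then have "is_path V E ys" using \<open>is_walk V E xs\<close> unfolding path_iff walk_iff by blast
  then show ?thesis using ys \<open>hd xs = u\<close> \<open>last xs = w\<close> by blast
qed

definition rp :: "'a \<Rightarrow> 'a list" where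
  "rp u = (THE P. is_path V E P \<and> hd P = r \<and> last P = u)"

lemma rp: "u \<in> V \<Longrightarrow> is_path V E (rp u) \<and> hd (rp u) = r \<and> last (rp u) = u"
proof -
  assume "u \<in> V"
  then obtain P where P: "is_path V E P \<and> hd P = r \<and> last P = u" using conn rV by blast
  show ?thesis unfolding rp_def
    by (rule theI[of _ P]) (use P punique in auto)
qed

lemma rp_unique: "is_path V E P \<Longrightarrow> hd P = r \<Longrightarrow> last P = u \<Longrightarrow> rp u = P"
proof -
  assume a: "is_path V E P" "hd P = r" "last P = u"
  then have "u \<in> V" unfolding path_iff by auto
  then show ?thesis using rp[of u] a punique by blast
qed

lemma rp_ne: "u \<in> V \<Longrightarrow> rp u \<noteq> []" using rp path_iff by blast

lemma rp_r: "rp r = [r]"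
  by (rule rp_unique) (auto simp: path_iff rV)

lemma rp_prefix: "y \<in> V \<Longrightarrow> rp y = A @ x # B \<Longrightarrow> rp x = A @ [x]"
proof -
  assume y: "y \<in> V" and s: "rp y = A @ x # B"
  have p: "is_path V E (rp y)" "hd (rp y) = r" using rp y by auto
  have "is_path V E (A @ [x])"
    using p s unfolding path_iff
    by (auto simp: successively_append_iff successively_Cons)
  moreover have "hd (A @ [x]) = r" using p s by (cases A) auto
  ultimately show ?thesis by (intro rp_unique) auto
qed

lemma anc_iff: "x \<in> V \<Longrightarrow> y \<in> V \<Longrightarrow> anc V E r x y \<longleftrightarrow> x \<in> set (rp y)"
proof
  assume "anc V E r x y"
  then obtain P where P: "is_path V E P" "hd P = r" "last P = y" "x \<in> set P" unfolding anc_def by blast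
  then have "rp y = P" using rp_unique by blast
  then show "x \<in> set (rp y)" using P by simp
next
  assume "y \<in> V" "x \<in> set (rp y)"
  then show "anc V E r x y" unfolding anc_def using rp[of y] by blast
qed

definition Dsc :: "'a \<Rightarrow> 'a \<Rightarrow> bool" where "Dsc x y \<longleftrightarrow> (\<exists>zs. rp y = rp x @ zs)"

lemma Dsc_iff: "x \<in> V \<Longrightarrow> y \<in> V \<Longrightarrow> anc V E r x y \<longleftrightarrow> Dsc x y"
proof -
  assume xV: "x \<in> V" and yV: "y \<in> V"
  show ?thesis
  proof
    assume "anc V E r x y"
    then have "x \<in> set (rp y)" using anc_iff xV yV by blast
    then obtain A B where "rp y = A @ x # B" by (meson split_list)
    then show "Dsc x y" unfolding Dsc_def using rp_prefix[OF yV] by fastforce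
  next
    assume "Dsc x y"
    then obtain zs where "rp y = rp x @ zs" unfolding Dsc_def by blast
    moreover have "x \<in> set (rp x)" using rp[OF xV] rp_ne[OF xV] by (metis last_in_set)
    ultimately show "anc V E r x y" using anc_iff xV yV by simp
  qed
qed

lemma Dsc_trans: "Dsc x y \<Longrightarrow> Dsc y z \<Longrightarrow> Dsc x z" unfolding Dsc_def by auto
lemma Dsc_refl: "Dsc x x" unfolding Dsc_def by auto

lemma chord:
  assumes "u \<in> V" "rp u = A @ [w, u]" "E u w'" "w' \<in> set (rp u)"
  shows "w' = w"
proof (rule ccontr)
  assume ne: "w' \<noteq> w"
  have "w' \<noteq> u" using assms(3) irr by blast
  then have "w' \<in> set A" using assms(2,4) ne by auto
  then obtain A1 A2 where A: "A = A1 @ w' # A2" by (meson split_list)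
  define C where "C = w' # A2 @ [w, u]"
  have p: "is_path V E (rp u)" using rp assms(1) by blast
  have rpu: "rp u = A1 @ C" using assms(2) A C_def by simp
  have "distinct C" "successively E C" using p rpu unfolding path_iff
    by (auto simp: successively_append_iff)
  moreover have "length C \<ge> 3" unfolding C_def by simp
  moreover have "E (last C) (hd C)" unfolding C_def using assms(3) by simp
  ultimately show False using nocyc by blast
qed

lemma parent_facts:
  assumes "u \<in> V" "u \<noteq> r"
  shows "E u (parent V E r u) \<and> parent V E r u \<in> V \<and> rp u = rp (parent V E r u) @ [u]"
proof -
  have p: "is_path V E (rp u)" "hd (rp u) = r" "last (rp u) = u" using rp assms(1) by auto
  have "length (rp u) \<ge> 2"
  proof (rule ccontr)
    assume "\<not> length (rp u) \<ge> 2"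
    moreover have "length (rp u) > 0" using rp_ne[OF assms(1)] by simp
    ultimately have "length (rp u) = 1" by linarith
    then show False using p assms(2) by (cases "rp u") auto
  qed
  then obtain A w where A: "rp u = A @ [w, u]"
  proof -
    obtain B where B: "rp u = B @ [u]" using p rp_ne[OF assms(1)] by (metis append_butlast_last_id)
    then have "B \<noteq> []" using \<open>length (rp u) \<ge> 2\<close> by auto
    then obtain A w where "B = A @ [w]" by (metis append_butlast_last_id)
    then show ?thesis using that B by simp
  qed
  have Ewu: "E w u" using p A unfolding path_iff by (simp add: successively_append_iff)
  then have wV: "w \<in> V" using inV by blast
  have rpw: "rp w = A @ [w]" using rp_prefix[OF assms(1)] A by simp
  have "(THE w'. E u w' \<and> anc V E r w' u) = w"
  proof (rule the_equality)
    show "E u w \<and> anc V E r w u" using sym[OF Ewu] anc_iff[OF wV assms(1)] A by auto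
  next
    fix w' assume h: "E u w' \<and> anc V E r w' u"
    then have "w' \<in> V" using inV by blast
    then have "w' \<in> set (rp u)" using h anc_iff assms(1) by blast
    then show "w' = w" using chord[OF assms(1) A] h by blast
  qed
  then have "parent V E r u = w" unfolding parent_def using assms(2) by simp
  then show ?thesis using sym[OF Ewu] wV rpw A by simp
qed

lemma parent_V: "u \<in> V \<Longrightarrow> parent V E r u \<in> V"
  using parent_facts[of u] rV by (cases "u = r") (auto simp: parent_def)

lemma pow_V: "u \<in> V \<Longrightarrow> (parent V E r ^^ i) u \<in> V"
  by (induction i) (auto simp: parent_V)

lemma parent_Dsc: "u \<in> V \<Longrightarrow> Dsc (parent V E r u) u"
  using parent_facts[of u] by (cases "u = r") (auto simp: parent_def Dsc_def)

lemma pow_Dsc: "u \<in> V \<Longrightarrow> Dsc ((parent V E r ^^ i) u) u"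
proof (induction i)
  case 0 then show ?case by (simp add: Dsc_refl)
next
  case (Suc i)
  then show ?case using parent_Dsc[OF pow_V[OF Suc.prems, of i]] Dsc_trans by auto
qed

lemma edge: "E u x \<Longrightarrow> x = parent V E r u \<or> u = parent V E r x"
proof -
  assume e: "E u x"
  have uV: "u \<in> V" and xV: "x \<in> V" using inV e by auto
  show ?thesis
  proof (cases "x \<in> set (rp u)")
    case True
    have "u \<noteq> r" using True rp_r irr e by auto
    then have "rp u = rp (parent V E r u) @ [u]" using parent_facts uV by blast
    moreover obtain A w where "rp (parent V E r u) = A @ [w]"
      using rp_ne[OF parent_V[OF uV]] by (metis append_butlast_last_id)
    ultimately have A: "rp u = A @ [w, u]" and "w = parent V E r u"
      using rp[OF parent_V[OF uV]] by auto
    then show ?thesis using chord[OF uV A e True] by simp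
  next
    case False
    have "is_path V E (rp u @ [x])" using rp[OF uV] False xV e rp_ne[OF uV] unfolding path_iff
      by (auto simp: successively_append_iff)
    then have rx: "rp x = rp u @ [x]" using rp[OF uV] rp_ne[OF uV] by (intro rp_unique) auto
    have "x \<noteq> r" using rx rp_r rp_ne[OF uV] by (cases "rp u") auto
    then have "rp x = rp (parent V E r x) @ [x]" using parent_facts xV by blast
    then have "rp (parent V E r x) = rp u" using rx by simp
    then have "last (rp (parent V E r x)) = last (rp u)" by simp
    then show ?thesis using rp[OF uV] rp[OF parent_V[OF xV]] by simp
  qed
qed

end



context tr
begin

abbreviation "p \<equiv> parent V E r"

lemma parent_r: "p r = r" by (simp add: parent_def)

lemma rp_child: "E y z \<Longrightarrow> z \<notin> set (rp y) \<Longrightarrow> rp z = rp y @ [z]"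
proof -
  assume e: "E y z" and n: "z \<notin> set (rp y)"
  have yV: "y \<in> V" and zV: "z \<in> V" using inV e by auto
  have "is_path V E (rp y @ [z])" using rp[OF yV] n zV e rp_ne[OF yV] unfolding path_iff
    by (auto simp: successively_append_iff)
  then show ?thesis using rp[OF yV] rp_ne[OF yV] by (intro rp_unique) auto
qed

lemma leaf_exists:
  assumes xV: "x \<in> V" and vV: "v \<in> V" and vr: "v \<noteq> r"
  shows "\<exists>l. is_leaf V E l \<and> Dsc x l"
proof -
  define S where "S = {y \<in> V. Dsc x y}"
  have finS: "finite S" using finV unfolding S_def by simp
  have xS: "x \<in> S" using xV Dsc_refl unfolding S_def by simp
  define m where "m = Max ((\<lambda>y. length (rp y)) ` S)"
  have "m \<in> (\<lambda>y. length (rp y)) ` S" unfolding m_def using finS xS by (intro Max_in) auto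
  then obtain y where yS: "y \<in> S" and ym: "length (rp y) = m" by auto
  have maxy: "\<And>z. z \<in> S \<Longrightarrow> length (rp z) \<le> length (rp y)"
    using ym finS unfolding m_def by simp
  have yV: "y \<in> V" using yS S_def by simp
  have nb: "\<And>z. E y z \<Longrightarrow> z \<in> set (rp y)"
  proof (rule ccontr)
    fix z assume e: "E y z" and n: "z \<notin> set (rp y)"
    then have rz: "rp z = rp y @ [z]" using rp_child by blast
    then have "Dsc y z" unfolding Dsc_def by blast
    then have "z \<in> S" using yS inV[OF e] Dsc_trans unfolding S_def by blast
    then show False using maxy rz by fastforce
  qed
  have nbp: "\<And>z. E y z \<Longrightarrow> z = p y"
  proof -
    fix z assume e: "E y z"
    show "z = p y"
    proof (rule ccontr)
      assume ne: "z \<noteq> p y"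
      then have yz: "y = p z" using edge[OF e] by blast
      have "z \<noteq> r" using yz e irr parent_r by auto
      then have rz: "rp z = rp y @ [z]" using parent_facts[of z] inV[OF e] yz by auto
      have "distinct (rp z)" using rp[of z] inV[OF e] unfolding path_iff by blast
      then have "z \<notin> set (rp y)" using rz by simp
      then show False using nb e by blast
    qed
  qed
  have "y \<noteq> r"
  proof
    assume yr: "y = r"
    obtain P where P: "is_path V E P" "hd P = r" "last P = v" using conn rV vV by blast
    then obtain w P' where "P = r # w # P'" using vr unfolding path_iff
      by (cases P; cases "tl P") auto
    then have "E r w" using P unfolding path_iff by simp
    then show False using nbp yr parent_r irr by auto
  qed
  then have "E y (p y)" using parent_facts yV by blast
  then have "{w \<in> V. E y w} = {p y}" using nbp inV by blast
  then have "is_leaf V E y" unfolding is_leaf_def using yV by simp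
  then show ?thesis using yS S_def by blast
qed

end



context tr
begin

lemma walkQ: "w \<noteq> [] \<Longrightarrow> successively E w \<Longrightarrow>
   \<exists>a b. a + b \<le> length w - 1 \<and> (p ^^ a) (hd w) = (p ^^ b) (last w)"
proof (induction w)
  case Nil then show ?case by simp
next
  case (Cons u w')
  show ?case
  proof (cases "w' = []")
    case True then show ?thesis by (intro exI[of _ 0]) simp
  next
    case False
    have e: "E u (hd w')" using Cons.prems False by (cases w') auto
    have "successively E w'" using Cons.prems by (auto simp: successively_Cons)
    then obtain a b where ab: "a + b \<le> length w' - 1" "(p ^^ a) (hd w') = (p ^^ b) (last w')"
      using Cons.IH False by blast
    have lst: "last (u # w') = last w'" using False by simp
    have len: "length (u # w') - 1 = length w'" by simp
    have lw: "length w' \<ge> 1" using False by (cases w') auto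
    show ?thesis
    proof (cases "hd w' = p u")
      case True
      have "(p ^^ Suc a) u = (p ^^ a) (p u)" by (simp only: funpow_Suc_right o_apply)
      then have "(p ^^ Suc a) u = (p ^^ a) (hd w')" using True by simp
      then show ?thesis using ab lst len lw by (intro exI[of _ "Suc a"] exI[of _ b]) auto
    next
      case False
      then have up: "u = p (hd w')" using edge[OF e] by blast
      show ?thesis
      proof (cases a)
        case 0
        then have "u = (p ^^ Suc b) (last w')" using up ab by simp
        then show ?thesis using ab lst len lw 0 by (intro exI[of _ 0] exI[of _ "Suc b"]) auto
      next
        case (Suc c)
        have "(p ^^ Suc c) (hd w') = (p ^^ c) (p (hd w'))" by (simp only: funpow_Suc_right o_apply)
        then have "(p ^^ a) (hd w') = (p ^^ c) u" using up Suc by simp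
        then show ?thesis using ab lst len lw Suc by (intro exI[of _ c] exI[of _ b]) auto
      qed
    qed
  qed
qed

lemma pow_split: "a \<le> m \<Longrightarrow> (p ^^ m) u = (p ^^ (m - a)) ((p ^^ a) u)"
proof -
  assume "a \<le> m"
  then have "m = (m - a) + a" by simp
  then have "(p ^^ m) = (p ^^ (m - a)) \<circ> (p ^^ a)" by (metis funpow_add)
  then show ?thesis by simp
qed

lemma Dsc_pow_via: "u \<in> V \<Longrightarrow> v \<in> V \<Longrightarrow> (p ^^ a) u = (p ^^ b) v \<Longrightarrow> a \<le> m \<Longrightarrow> Dsc ((p ^^ m) u) v"
proof -
  assume uV: "u \<in> V" and vV: "v \<in> V" and eq: "(p ^^ a) u = (p ^^ b) v" and am: "a \<le> m"
  have "(p ^^ m) u = (p ^^ (m - a)) ((p ^^ b) v)" using pow_split[OF am] eq by simp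
  moreover have "Dsc ((p ^^ (m - a)) ((p ^^ b) v)) ((p ^^ b) v)" using pow_Dsc pow_V vV by blast
  moreover have "Dsc ((p ^^ b) v) v" using pow_Dsc vV by blast
  ultimately show ?thesis using Dsc_trans by metis
qed

end



context tr
begin

lemma key:
  assumes xsV: "set xs = V" and xV: "x \<in> V" and yV: "y \<in> V" and zV: "z \<in> V"
    and dx: "Dsc x z" and dy: "Dsc y z" and vV: "v \<in> V" and vr: "v \<noteq> r"
  shows "sL V E r xs x \<le> tL V E r xs y"
proof -
  obtain l where l: "is_leaf V E l" "Dsc z l" using leaf_exists[OF zV vV vr] by blast
  have lV: "l \<in> V" using l unfolding is_leaf_def by blast
  have "l \<in> set (leaves_seq V E xs)" unfolding leaves_seq_def using l(1) lV xsV by simp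
  then obtain i where i: "i < length (leaves_seq V E xs)" "leaves_seq V E xs ! i = l"
    by (meson in_set_conv_nth)
  have "anc V E r x l" using Dsc_iff[OF xV lV] Dsc_trans[OF dx l(2)] by blast
  then have ix: "i \<in> Lset V E r xs x" unfolding Lset_def using i by simp
  have "anc V E r y l" using Dsc_iff[OF yV lV] Dsc_trans[OF dy l(2)] by blast
  then have iy: "i \<in> Lset V E r xs y" unfolding Lset_def using i by simp
  have fin: "\<And>w. finite (Lset V E r xs w)" unfolding Lset_def by simp
  have "sL V E r xs x \<le> i" unfolding sL_def using ix fin by simp
  also have "i \<le> tL V E r xs y" unfolding tL_def using iy fin by simp
  finally show ?thesis .
qed

lemma main:
  assumes xsV: "set xs = V" and k: "k \<ge> 1" and ik: "i < k" and adj: "pow_adj V E k u v"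
  shows "I_adj V E r xs k i u v"
proof -
  have uV: "u \<in> V" and vV: "v \<in> V" and uv: "u \<noteq> v" and dk: "tdist V E u v \<le> k"
    using adj unfolding pow_adj_def by auto
  obtain v' where v': "v' \<in> V" "v' \<noteq> r" using uV vV uv by blast
  have ex: "\<exists>n ws. is_walk V E ws \<and> hd ws = u \<and> last ws = v \<and> length ws = Suc n"
  proof -
    obtain ws where "is_walk V E ws" "hd ws = u" "last ws = v"
      using tree uV vV unfolding is_tree_def by blast
    moreover then have "length ws = Suc (length ws - 1)" unfolding walk_iff by (cases ws) auto
    ultimately show ?thesis by blast
  qed
  obtain ws where ws: "is_walk V E ws" "hd ws = u" "last ws = v" "length ws = Suc (tdist V E u v)"
    using LeastI_ex[OF ex] unfolding tdist_def by blast
  obtain a b where ab: "a + b \<le> length ws - 1" "(p ^^ a) u = (p ^^ b) v"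
    using walkQ[of ws] ws unfolding walk_iff by blast
  have abk: "a + b \<le> k" using ab(1) ws(4) dk by simp
  define j where "j = k - 1 - i"
  have ij: "i + j = k - 1" using j_def ik by simp
  have c1: "\<exists>z\<in>V. Dsc ((p ^^ i) u) z \<and> Dsc ((p ^^ j) v) z"
  proof (cases "a \<le> i")
    case True
    then show ?thesis using Dsc_pow_via[OF uV vV ab(2) True] pow_Dsc[OF vV] vV by blast
  next
    case False
    then have "b \<le> j" using ij abk by linarith
    then show ?thesis using Dsc_pow_via[OF vV uV ab(2)[symmetric]] pow_Dsc[OF uV] uV by blast
  qed
  have c2: "\<exists>z\<in>V. Dsc ((p ^^ i) v) z \<and> Dsc ((p ^^ j) u) z"
  proof (cases "b \<le> i")
    case True
    then show ?thesis using Dsc_pow_via[OF vV uV ab(2)[symmetric] True] pow_Dsc[OF uV] uV by blast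
  next
    case False
    then have "a \<le> j" using ij abk by linarith
    then show ?thesis using Dsc_pow_via[OF uV vV ab(2)] pow_Dsc[OF vV] vV by blast
  qed
  let ?s = "sL V E r xs" and ?t = "tL V E r xs"
  have i1: "?s ((p ^^ i) u) \<le> ?t ((p ^^ j) v)"
    using c1 key[OF xsV pow_V[OF uV] pow_V[OF vV] _ _ _ v'] by blast
  have i2: "?s ((p ^^ i) v) \<le> ?t ((p ^^ j) u)"
    using c2 key[OF xsV pow_V[OF vV] pow_V[OF uV] _ _ _ v'] by blast
  have i3: "?s ((p ^^ i) u) \<le> ?t ((p ^^ j) u)"
    using key[OF xsV pow_V[OF uV] pow_V[OF uV] uV pow_Dsc[OF uV] pow_Dsc[OF uV] v'] by blast
  have i4: "?s ((p ^^ i) v) \<le> ?t ((p ^^ j) v)"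
    using key[OF xsV pow_V[OF vV] pow_V[OF vV] vV pow_Dsc[OF vV] pow_Dsc[OF vV] v'] by blast
  define m where "m = max (?s ((p ^^ i) u)) (?s ((p ^^ i) v))"
  have "m \<in> f_int V E r xs k i u \<inter> f_int V E r xs k i v"
    unfolding f_int_def m_def j_def[symmetric] using i1 i2 i3 i4 by auto
  then show ?thesis unfolding I_adj_def using uV vV uv by blast
qed

end

theorem lemma7:
  fixes V :: "'a set" and E :: "'a \<Rightarrow> 'a \<Rightarrow> bool" and r :: 'a
    and k :: nat and xs :: "'a list"
  assumes "is_tree V E" and "r \<in> V" and "\<not> is_leaf V E r" and "k \<ge> 1"
    and "is_dfs_order V E r xs"
  shows "\<forall>i<k. \<forall>u v. pow_adj V E k u v \<longrightarrow> I_adj V E r xs k i u v"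
proof -
  interpret tr V E r using assms(1,2) by unfold_locales
  have "set xs = V" using assms(5) unfolding is_dfs_order_def by blast
  then show ?thesis using main assms(4) by blast
qed

end
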